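(* Let $\varphi$ be a rational self-map of $\mathbb{D}$ having order of contact $n$ (an even positive integer) with $\partial\mathbb{D}$ at $\zeta\in\partial\mathbb{D}$, let $\lambda=\varphi(\zeta)$, and let $\sigma$ be a branch of $\varphi_e^{-1}$ defined on a neighborhood of $\lambda$ with $\sigma(\lambda)=\zeta$. Then $$D_n(\sigma\circ\varphi,\zeta)=\Big(\zeta,1,0,\dots,0,\frac{c}{\varphi'(\zeta)}\Big),\qquad D_n(\varphi\circ\sigma,\lambda)=\Big(\lambda,1,0,\dots,0,\frac{c}{\varphi'(\zeta)^n}\Big),$$ where $c=\varphi^{(n)}(\zeta)-\varphi_e^{(n)}(\zeta)\neq0$.
   Context: $\varphi_e=\rho\circ\varphi\circ\rho$ with $\rho(z)=1/\bar z$ (so $\varphi_e$ is analytic near $\zeta$ and $\varphi_e(\zeta)=\lambda$). For $h$ analytic at $z$, $D_n(h,z)=(h(z),h'(z),\dots,h^{(n)}(z))$. Order of contact $n$ at $\zeta$: $\varphi(\zeta)\in\partial\mathbb{D}$ and $\frac{1-|\varphi(e^{i\theta})|^2}{|\varphi(\zeta)-\varphi(e^{i\theta})|^n}$ is bounded above and away from zero as $e^{i\theta}\to\zeta$. *)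

theory Defs
  imports "HOL-Analysis.Analysis" "HOL-Computational_Algebra.Polynomial"
begin

definition rational_self_map :: "(complex \<Rightarrow> complex) \<Rightarrow> bool" where
  "rational_self_map \<phi> \<longleftrightarrow>
     (\<exists>p q :: complex poly. (\<forall>z. \<phi> z = poly p z / poly q z) \<and>
        (\<forall>z \<in> ball 0 1. poly q z \<noteq> 0 \<and> \<phi> z \<in> ball 0 1))"

definition order_of_contact :: "(complex \<Rightarrow> complex) \<Rightarrow> nat \<Rightarrow> complex \<Rightarrow> bool" where
  "order_of_contact \<phi> n \<zeta> \<longleftrightarrow>
     norm (\<phi> \<zeta>) = 1 \<and>
     (\<exists>A B :: real. 0 < A \<and> 0 < B \<and>
        (\<forall>\<^sub>F w in at \<zeta> within sphere 0 1.
           A \<le> (1 - (norm (\<phi> w))\<^sup>2) / (norm (\<phi> \<zeta> - \<phi> w)) ^ n \<and>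
           (1 - (norm (\<phi> w))\<^sup>2) / (norm (\<phi> \<zeta> - \<phi> w)) ^ n \<le> B))"

definition rho :: "complex \<Rightarrow> complex" where
  "rho z = inverse (cnj z)"

definition phi_e :: "(complex \<Rightarrow> complex) \<Rightarrow> complex \<Rightarrow> complex" where
  "phi_e \<phi> = rho \<circ> \<phi> \<circ> rho"

definition Dn :: "(complex \<Rightarrow> complex) \<Rightarrow> complex \<Rightarrow> nat \<Rightarrow> complex list" where
  "Dn h z n = map (\<lambda>k. (deriv ^^ k) h z) [0..<Suc n]"

end

theory Submission
  imports Defs "HOL-Complex_Analysis.Complex_Analysis"
begin

lemma poly_holo: "(\<lambda>z. poly p z) holomorphic_on (S::complex set)"
  by (meson field_differentiable_at_within field_differentiable_def holomorphic_on_def poly_DERIV)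

lemma inv_cnj_unit: "norm (z::complex) = 1 \<Longrightarrow> inverse (cnj z) = z"
proof -
  assume "norm z = 1"
  then have "z * cnj z = 1" using complex_norm_square[of z] by simp
  then show ?thesis by (metis inverse_unique mult.commute)
qed

lemma hd_factor:
  fixes k :: "complex \<Rightarrow> complex"
  assumes "k holomorphic_on ball z0 r" "0 < r" "j \<le> n"
  shows "(deriv ^^ j) (\<lambda>w. (w - z0) ^ n * k w) z0 = (if j = n then fact n * k z0 else 0)"
proof -
  have "(deriv ^^ j) (\<lambda>w. (w - z0) ^ n * k w) z0 =
     (\<Sum>i = 0..j. of_nat (j choose i) * (deriv ^^ i) (\<lambda>w. (w - z0) ^ n) z0 * (deriv ^^ (j-i)) k z0)"
    by (rule higher_deriv_mult[of _ "ball z0 r"]) (auto simp: assms intro!: holomorphic_intros)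
  also have "\<dots> = (\<Sum>i = 0..j. if i = n then fact n * k z0 else 0)"
  proof (rule sum.cong)
    fix i assume i: "i \<in> {0..j}"
    show "of_nat (j choose i) * (deriv ^^ i) (\<lambda>w. (w - z0) ^ n) z0 * (deriv ^^ (j-i)) k z0
          = (if i = n then fact n * k z0 else 0)"
    proof (cases "i = n")
      case True
      then have "j = n" using i assms by auto
      then show ?thesis using True by (simp add: higher_deriv_power pochhammer_fact)
    next
      case False
      then have "i < n" using i assms by auto
      then show ?thesis using False by (simp add: higher_deriv_power)
    qed
  qed simp
  also have "\<dots> = (if j = n then fact n * k z0 else 0)"
    using assms(3) by (auto simp: sum.delta)
  finally show ?thesis .
qed

lemma Dn_shape:
  fixes k f :: "complex \<Rightarrow> complex"
  assumes "k holomorphic_on ball z0 r" "0 < r" "2 \<le> n"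
    and "\<forall>w\<in>ball z0 r. f w = w + (w - z0) ^ n * k w"
  shows "Dn f z0 n = [z0, 1] @ replicate (n-2) 0 @ [fact n * k z0]"
proof -
  have D: "(deriv ^^ j) f z0 = (if j = 0 then z0 else if j = 1 then 1 else 0)
             + (if j = n then fact n * k z0 else 0)" if "j \<le> n" for j
  proof -
    have ev: "eventually (\<lambda>w. f w = w + (w - z0) ^ n * k w) (nhds z0)"
      using eventually_nhds_in_open[of "ball z0 r" z0] assms(2,4)
      by (auto elim: eventually_mono)
    have "(deriv ^^ j) f z0 = (deriv ^^ j) (\<lambda>w. w + (w - z0) ^ n * k w) z0"
      by (rule higher_deriv_cong_ev[OF ev refl])
    also have "\<dots> = (deriv ^^ j) (\<lambda>w. w) z0 + (deriv ^^ j) (\<lambda>w. (w - z0) ^ n * k w) z0"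
      by (rule higher_deriv_add[of _ "ball z0 r"]) (auto simp: assms intro!: holomorphic_intros)
    also have "\<dots> = (if j = 0 then z0 else if j = 1 then 1 else 0)
             + (if j = n then fact n * k z0 else 0)"
      using hd_factor[OF assms(1,2) that] by simp
    finally show ?thesis .
  qed
  have up: "[0..<Suc n] = [0, 1] @ [2..<n] @ [n]"
    using assms(3) by (simp add: upt_conv_Cons numeral_2_eq_2) 
  have m: "map (\<lambda>j. (deriv ^^ j) f z0) [2..<n] = replicate (n-2) 0"
  proof -
    have "map (\<lambda>j. (deriv ^^ j) f z0) [2..<n] = map (\<lambda>j. 0) [2..<n]"
      by (rule map_cong) (auto simp: D)
    then show ?thesis by (simp add: map_replicate_const)
  qed
  have d0: "f z0 = z0" using D[of 0] assms(3) by simp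
  have d1: "deriv f z0 = 1" using D[of 1] assms(3) by simp
  have dn: "(deriv ^^ n) f z0 = fact n * k z0" using D[of n] assms(3) by simp
  show ?thesis
    unfolding Dn_def up using m d0 d1 dn by simp
qed

lemma strong_diff:
  fixes s :: "complex \<Rightarrow> complex"
  assumes "s holomorphic_on U" "open U" "a0 \<in> U" "e > 0"
  shows "\<exists>d>0. ball a0 d \<subseteq> U \<and> (\<forall>a\<in>ball a0 d. \<forall>b\<in>ball a0 d.
           norm (s a - s b - deriv s a0 * (a - b)) \<le> e * norm (a - b))"
proof -
  have "continuous_on U (deriv s)"
    using assms holomorphic_deriv holomorphic_on_imp_continuous_on by blast
  then have "isCont (deriv s) a0" using assms continuous_on_eq_continuous_at by blast
  then obtain d1 where d1: "d1 > 0" "\<And>w. dist w a0 < d1 \<Longrightarrow> dist (deriv s w) (deriv s a0) < e"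
    using assms(4) unfolding continuous_at_eps_delta by (metis dist_commute)
  obtain d2 where d2: "d2 > 0" "ball a0 d2 \<subseteq> U" using assms openE by blast
  define d where "d = min d1 d2"
  have dpos: "d > 0" using d1 d2 by (simp add: d_def)
  have sub: "ball a0 d \<subseteq> U" using d2 by (auto simp: d_def)
  have bnd: "norm ((s a - deriv s a0 * a) - (s b - deriv s a0 * b)) \<le> e * norm (a - b)"
    if "a \<in> ball a0 d" "b \<in> ball a0 d" for a b
  proof (rule field_differentiable_bound[of "ball a0 d" _ "\<lambda>w. deriv s w - deriv s a0"])
    show "convex (ball a0 d)" by simp
    fix z assume z: "z \<in> ball a0 d"
    then have zU: "z \<in> U" using sub by auto
    have "(s has_field_derivative deriv s z) (at z)"
      using assms(1,2) zU holomorphic_derivI by blast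
    moreover have "((\<lambda>w. deriv s a0 * w) has_field_derivative deriv s a0 * 1) (at z)"
      by (intro DERIV_cmult DERIV_ident)
    ultimately have "((\<lambda>w. s w - deriv s a0 * w) has_field_derivative deriv s z - deriv s a0 * 1) (at z)"
      by (rule DERIV_diff)
    then show "((\<lambda>w. s w - deriv s a0 * w) has_field_derivative deriv s z - deriv s a0) (at z within ball a0 d)"
      by (simp add: has_field_derivative_at_within)
    have "dist z a0 < d1" using z by (auto simp: d_def dist_commute)
    then show "norm (deriv s z - deriv s a0) \<le> e"
      using d1(2) by (simp add: dist_norm less_imp_le)
  qed (use that in auto)
  show ?thesis
    using dpos sub bnd by (intro exI[of _ d]) (auto simp: algebra_simps)
qed

lemma norm_refl_diff:
  fixes a :: complex
  assumes "a \<noteq> 0" "norm a \<le> 1"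
  shows "norm (inverse (cnj a) - a) = (1 - (norm a)\<^sup>2) / norm a"
proof -
  have "a * cnj a = of_real ((norm a)\<^sup>2)" using complex_norm_square[of a] by simp
  then have "inverse (cnj a) - a = of_real (1 - (norm a)\<^sup>2) / cnj a"
    using assms(1) by (simp add: field_simps)
  then have "norm (inverse (cnj a) - a) = norm (complex_of_real (1 - (norm a)\<^sup>2)) / norm (cnj a)"
    by (simp only: norm_divide)
  also have "\<dots> = \<bar>1 - (norm a)\<^sup>2\<bar> / norm a"
    by (simp only: norm_of_real complex_mod_cnj)
  finally have "norm (inverse (cnj a) - a) = \<bar>1 - (norm a)\<^sup>2\<bar> / norm a" .
  moreover have "(norm a)\<^sup>2 \<le> 1" using assms(2) by (simp add: power_le_one)
  ultimately show ?thesis by simp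
qed

lemma circle_bounds:
  fixes \<phi> :: "complex \<Rightarrow> complex" and S :: "complex set"
  assumes hasD: "(\<phi> has_field_derivative D) (at \<zeta>)" and D0: "D \<noteq> 0"
    and AB: "A > 0" "B > 0"
    and ev: "\<forall>\<^sub>F w in at \<zeta> within S. A \<le> (1 - (norm (\<phi> w))\<^sup>2) / (norm (\<phi> \<zeta> - \<phi> w)) ^ n \<and>
           (1 - (norm (\<phi> w))\<^sup>2) / (norm (\<phi> \<zeta> - \<phi> w)) ^ n \<le> B"
    and n1: "norm (\<phi> \<zeta>) = 1"
  shows "\<forall>\<^sub>F w in at \<zeta> within S. w \<noteq> \<zeta> \<and> w \<in> S \<and>
     A * (norm D / 2) ^ n * norm (w - \<zeta>) ^ n \<le> norm (inverse (cnj (\<phi> w)) - \<phi> w) \<and>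
     norm (inverse (cnj (\<phi> w)) - \<phi> w) \<le> 2 * B * (2 * norm D) ^ n * norm (w - \<zeta>) ^ n"
proof -
  let ?F = "at \<zeta> within S"
  have lim: "((\<lambda>w. (\<phi> w - \<phi> \<zeta>) / (w - \<zeta>)) \<longlongrightarrow> D) (at \<zeta>)"
    using hasD has_field_derivative_iff by blast
  then have lim': "((\<lambda>w. norm ((\<phi> w - \<phi> \<zeta>) / (w - \<zeta>))) \<longlongrightarrow> norm D) ?F"
    by (intro tendsto_norm) (rule tendsto_mono[OF at_le[OF subset_UNIV]])
  have nD: "norm D > 0" using D0 by simp
  have "norm D / 2 < norm D" using nD by simp
  from order_tendstoD(1)[OF lim' this]
  have e1: "\<forall>\<^sub>F w in ?F. norm ((\<phi> w - \<phi> \<zeta>) / (w - \<zeta>)) > norm D / 2" .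
  have "norm D < 2 * norm D" using nD by simp
  from order_tendstoD(2)[OF lim' this]
  have e2: "\<forall>\<^sub>F w in ?F. norm ((\<phi> w - \<phi> \<zeta>) / (w - \<zeta>)) < 2 * norm D" .
  have "isCont \<phi> \<zeta>" using hasD DERIV_isCont by blast
  then have "((\<lambda>w. norm (\<phi> w)) \<longlongrightarrow> 1) ?F"
    using n1 by (metis continuous_at_imp_continuous_at_within continuous_within tendsto_norm)
  from order_tendstoD(1)[OF this, of "1/2"]
  have e3: "\<forall>\<^sub>F w in ?F. norm (\<phi> w) > 1/2" by simp
  have e4: "\<forall>\<^sub>F w in ?F. w \<noteq> \<zeta> \<and> w \<in> S"
    by (simp add: eventually_at_filter)
  show ?thesis
    using e1 e2 e3 e4 ev
  proof eventually_elim
    case (elim w)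
    define a where "a = \<phi> w"
    define d where "d = norm (w - \<zeta>)"
    define e where "e = norm (\<phi> \<zeta> - a)"
    have dpos: "d > 0" using elim by (simp add: d_def)
    have "e = norm ((\<phi> w - \<phi> \<zeta>) / (w - \<zeta>)) * d"
      using dpos by (simp add: e_def a_def d_def norm_divide norm_minus_commute)
    then have el: "norm D / 2 * d < e" and eu: "e < 2 * norm D * d"
      using elim dpos by auto
    have "norm D / 2 * d > 0" using nD dpos by simp
    then have epos: "e > 0" using el by linarith
    have en: "e ^ n > 0" using epos by simp
    have c1: "A * e ^ n \<le> 1 - (norm a)\<^sup>2"
      using elim en by (simp add: a_def e_def pos_le_divide_eq)
    have c2: "1 - (norm a)\<^sup>2 \<le> B * e ^ n"
      using elim en by (simp add: a_def e_def pos_divide_le_eq)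
    have "A * e ^ n > 0" using AB en by simp
    then have pos: "1 - (norm a)\<^sup>2 > 0" using c1 by linarith
    have na1: "norm a \<le> 1"
    proof (rule ccontr)
      assume "\<not> norm a \<le> 1"
      then have "1 \<le> (norm a)\<^sup>2" by (simp add: one_le_power)
      then show False using pos by simp
    qed
    have na2: "norm a > 1/2" using elim by (simp add: a_def)
    have a0: "a \<noteq> 0" using na2 by auto
    have N: "norm (inverse (cnj a) - a) = (1 - (norm a)\<^sup>2) / norm a"
      by (rule norm_refl_diff[OF a0 na1])
    have low1: "(norm D / 2 * d) ^ n \<le> e ^ n"
      using el nD dpos by (intro power_mono) auto
    have up1: "e ^ n \<le> (2 * norm D * d) ^ n"
      using eu epos by (intro power_mono) auto
    have L: "A * (norm D / 2) ^ n * d ^ n \<le> norm (inverse (cnj a) - a)"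
    proof -
      have pm: "(norm D / 2 * d) ^ n = (norm D / 2) ^ n * d ^ n" by (rule power_mult_distrib)
      have "A * (norm D / 2) ^ n * d ^ n = A * (norm D / 2 * d) ^ n"
        by (simp only: pm mult.assoc)
      also have "\<dots> \<le> A * e ^ n" using low1 AB by simp
      also have "\<dots> \<le> 1 - (norm a)\<^sup>2" by (rule c1)
      also have "\<dots> \<le> (1 - (norm a)\<^sup>2) / norm a"
        using pos na1 na2 a0 by (simp add: le_divide_eq)
      finally show ?thesis using N by simp
    qed
    have U: "norm (inverse (cnj a) - a) \<le> 2 * B * (2 * norm D) ^ n * d ^ n"
    proof -
      have "norm (inverse (cnj a) - a) = (1 - (norm a)\<^sup>2) / norm a" by (rule N)
      also have "\<dots> \<le> 2 * (1 - (norm a)\<^sup>2)"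
      proof -
        have ia: "1 / norm a \<le> 2" using na2 by (simp add: divide_le_eq)
        have "(1 - (norm a)\<^sup>2) * (1 / norm a) \<le> (1 - (norm a)\<^sup>2) * 2"
          by (rule mult_left_mono[OF ia]) (use pos in simp)
        then show ?thesis by (simp add: mult.commute)
      qed
      also have "\<dots> \<le> 2 * (B * e ^ n)" using c2 by simp
      also have "\<dots> \<le> 2 * (B * (2 * norm D * d) ^ n)" using up1 AB by simp
      also have "\<dots> = 2 * B * (2 * norm D) ^ n * d ^ n"
        by (simp only: power_mult_distrib mult.assoc)
      finally show ?thesis .
    qed
    show ?case using L U elim by (simp add: a_def d_def)
  qed
qed

lemma order_from_bounds:
  fixes h :: "complex \<Rightarrow> complex" and S :: "complex set"
  assumes lp: "\<zeta> islimpt S" and hc: "isCont h \<zeta>" and h0: "h \<zeta> \<noteq> 0" and L: "L > 0"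
    and ev: "\<forall>\<^sub>F w in at \<zeta> within S. w \<noteq> \<zeta> \<and> L * norm (w - \<zeta>) ^ n \<le> norm ((w - \<zeta>) ^ m * h w)
                \<and> norm ((w - \<zeta>) ^ m * h w) \<le> M * norm (w - \<zeta>) ^ n"
  shows "m = n"
proof -
  let ?F = "at \<zeta> within S"
  have nt: "?F \<noteq> bot" using lp trivial_limit_within by blast
  have t0: "((\<lambda>w. norm (w - \<zeta>)) \<longlongrightarrow> 0) ?F"
  proof -
    have "((\<lambda>w. w - \<zeta>) \<longlongrightarrow> \<zeta> - \<zeta>) ?F" by (intro tendsto_diff tendsto_ident_at tendsto_const)
    from tendsto_norm[OF this] show ?thesis by simp
  qed
  have th: "((\<lambda>w. norm (h w)) \<longlongrightarrow> norm (h \<zeta>)) ?F"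
    using hc by (metis continuous_at_imp_continuous_at_within continuous_within tendsto_norm)
  have hpos: "norm (h \<zeta>) > 0" using h0 by simp
  show ?thesis
  proof (rule ccontr)
    assume "m \<noteq> n"
    then consider "m > n" | "m < n" by linarith
    then show False
    proof cases
      case 1
      have t1: "((\<lambda>w. norm (w - \<zeta>) ^ (m - n) * norm (h w)) \<longlongrightarrow> 0 ^ (m - n) * norm (h \<zeta>)) ?F"
        by (intro tendsto_mult tendsto_power t0 th)
      then have "\<forall>\<^sub>F w in ?F. norm (w - \<zeta>) ^ (m - n) * norm (h w) < L"
        using 1 L by (intro order_tendstoD(2)[OF t1]) (simp add: power_0_left)
      with ev have "\<forall>\<^sub>F w in ?F. False"
      proof eventually_elim
        case (elim w)
        have dpos: "norm (w - \<zeta>) ^ n > 0" using elim by simp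
        have "norm ((w - \<zeta>) ^ m * h w) = norm (w - \<zeta>) ^ n * (norm (w - \<zeta>) ^ (m - n) * norm (h w))"
          using 1 by (simp add: norm_mult norm_power power_add[symmetric])
        then have "L * norm (w - \<zeta>) ^ n \<le> norm (w - \<zeta>) ^ n * (norm (w - \<zeta>) ^ (m - n) * norm (h w))"
          using elim by simp
        then have "L \<le> norm (w - \<zeta>) ^ (m - n) * norm (h w)"
          using dpos by (simp add: mult.commute)
        then show ?case using elim by simp
      qed
      then show False using nt eventually_False by blast
    next
      case 2
      have t1: "((\<lambda>w. M * norm (w - \<zeta>) ^ (n - m)) \<longlongrightarrow> M * 0 ^ (n - m)) ?F"
        by (intro tendsto_mult tendsto_power t0 tendsto_const)
      then have a1: "\<forall>\<^sub>F w in ?F. M * norm (w - \<zeta>) ^ (n - m) < norm (h \<zeta>) / 2"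
        using 2 hpos by (intro order_tendstoD(2)[OF t1]) (simp add: power_0_left)
      have a2: "\<forall>\<^sub>F w in ?F. norm (h w) > norm (h \<zeta>) / 2"
        using hpos by (intro order_tendstoD(1)[OF th]) simp
      from ev a1 a2 have "\<forall>\<^sub>F w in ?F. False"
      proof eventually_elim
        case (elim w)
        have dpos: "norm (w - \<zeta>) ^ m > 0" using elim by simp
        have pw: "norm (w - \<zeta>) ^ n = norm (w - \<zeta>) ^ m * norm (w - \<zeta>) ^ (n - m)"
          using 2 by (simp add: power_add[symmetric])
        have "norm (w - \<zeta>) ^ m * norm (h w) \<le> M * norm (w - \<zeta>) ^ n"
          using elim by (simp add: norm_mult norm_power)
        also have "\<dots> = norm (w - \<zeta>) ^ m * (M * norm (w - \<zeta>) ^ (n - m))"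
          by (simp only: pw mult_ac)
        finally have "norm (h w) \<le> M * norm (w - \<zeta>) ^ (n - m)"
          using dpos by (simp only: mult_le_cancel_left_pos)
        then show ?case using elim by simp
      qed
      then show False using nt eventually_False by blast
    qed
  qed
qed

theorem mainTheorem9:
  fixes \<phi> \<sigma> :: "complex \<Rightarrow> complex" and n :: nat and \<zeta> :: complex and U :: "complex set"
  assumes "rational_self_map \<phi>"
    and "even n" and "n > 0"
    and "norm \<zeta> = 1"
    and "order_of_contact \<phi> n \<zeta>"
    and "open U" and "\<phi> \<zeta> \<in> U" and "\<sigma> holomorphic_on U"
    and "\<sigma> (\<phi> \<zeta>) = \<zeta>"
    and "\<forall>w \<in> U. phi_e \<phi> (\<sigma> w) = w"
  shows "(deriv ^^ n) \<phi> \<zeta> - (deriv ^^ n) (phi_e \<phi>) \<zeta> \<noteq> 0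
       \<and> Dn (\<sigma> \<circ> \<phi>) \<zeta> n = [\<zeta>, 1] @ replicate (n - 2) 0 @
            [((deriv ^^ n) \<phi> \<zeta> - (deriv ^^ n) (phi_e \<phi>) \<zeta>) / deriv \<phi> \<zeta>]
       \<and> Dn (\<phi> \<circ> \<sigma>) (\<phi> \<zeta>) n = [\<phi> \<zeta>, 1] @ replicate (n - 2) 0 @
            [((deriv ^^ n) \<phi> \<zeta> - (deriv ^^ n) (phi_e \<phi>) \<zeta>) / (deriv \<phi> \<zeta>) ^ n]"
proof -
  obtain p q where pq: "\<And>z. \<phi> z = poly p z / poly q z"
    using assms(1) unfolding rational_self_map_def by blast
  define lam where "lam = \<phi> \<zeta>"
  obtain A B where AB: "A > 0" "B > 0" and evc:
    "\<forall>\<^sub>F w in at \<zeta> within sphere 0 1.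
           A \<le> (1 - (norm (\<phi> w))\<^sup>2) / (norm (\<phi> \<zeta> - \<phi> w)) ^ n \<and>
           (1 - (norm (\<phi> w))\<^sup>2) / (norm (\<phi> \<zeta> - \<phi> w)) ^ n \<le> B"
    using assms(5) unfolding order_of_contact_def by blast
  have nlam: "norm lam = 1" using assms(5) unfolding order_of_contact_def lam_def by blast
  have n2: "2 \<le> n"
  proof -
    have "n \<noteq> 1" using assms(2) by auto
    then show ?thesis using assms(3) by linarith
  qed
  have z0: "\<zeta> \<noteq> 0" using assms(4) by auto
  have q0: "poly q \<zeta> \<noteq> 0"
  proof
    assume "poly q \<zeta> = 0"
    then have "lam = 0" by (simp add: lam_def pq)
    then show False using nlam by simp
  qed
  have p0: "poly p \<zeta> \<noteq> 0"
  proof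
    assume "poly p \<zeta> = 0"
    then have "lam = 0" by (simp add: lam_def pq)
    then show False using nlam by simp
  qed
  define pe where "pe = phi_e \<phi>"
  have pe_eq: "\<And>z. pe z = inverse (cnj (\<phi> (inverse (cnj z))))"
    by (simp add: pe_def phi_e_def rho_def)
  define p' where "p' = map_poly cnj p"
  define q' where "q' = map_poly cnj q"
  have pe_poly: "\<And>z. pe z = poly q' (inverse z) / poly p' (inverse z)"
    by (simp add: pe_eq pq p'_def q'_def complex_cnj_divide inverse_divide)
  have izeta: "inverse (cnj \<zeta>) = \<zeta>" using inv_cnj_unit[OF assms(4)] .
  have ilam: "inverse (cnj lam) = lam" using inv_cnj_unit[OF nlam] .
  have pe_zeta: "pe \<zeta> = lam" by (simp add: pe_eq izeta ilam lam_def[symmetric])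
  have p'0: "poly p' (inverse \<zeta>) \<noteq> 0"
  proof -
    have "inverse \<zeta> = cnj \<zeta>" using izeta by (metis complex_cnj_cnj complex_cnj_inverse)
    then show ?thesis using p0 by (simp add: p'_def)
  qed
  have cq: "isCont (poly q) \<zeta>" using DERIV_isCont[OF poly_DERIV] .
  have cp: "isCont (\<lambda>z. poly p' (inverse z)) \<zeta>"
    using z0 by (intro continuous_intros isCont_o2[OF _ DERIV_isCont[OF poly_DERIV]]) auto
  obtain e1 where e1: "e1 > 0" "\<And>y. dist \<zeta> y < e1 \<Longrightarrow> poly q y \<noteq> 0"
    using continuous_at_avoid[OF cq q0] by blast
  obtain e2 where e2: "e2 > 0" "\<And>y. dist \<zeta> y < e2 \<Longrightarrow> poly p' (inverse y) \<noteq> 0"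
    using continuous_at_avoid[OF cp p'0] by blast
  define r0 where "r0 = min 1 (min e1 e2)"
  have r0: "r0 > 0" using e1 e2 by (simp add: r0_def)
  have B0: "\<And>z. z \<in> ball \<zeta> r0 \<Longrightarrow> z \<noteq> 0 \<and> poly q z \<noteq> 0 \<and> poly p' (inverse z) \<noteq> 0"
  proof -
    fix z assume z: "z \<in> ball \<zeta> r0"
    have "z \<noteq> 0"
    proof
      assume "z = 0"
      then have "dist \<zeta> 0 < 1" using z by (simp add: r0_def)
      then show False using assms(4) by simp
    qed
    then show "z \<noteq> 0 \<and> poly q z \<noteq> 0 \<and> poly p' (inverse z) \<noteq> 0"
      using z e1 e2 by (simp add: r0_def)
  qed
  have phi_fun: "\<phi> = (\<lambda>z. poly p z / poly q z)" using pq by auto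
  have holphi: "\<phi> holomorphic_on ball \<zeta> r0"
    unfolding phi_fun using B0 by (intro holomorphic_intros poly_holo) auto
  have hinv: "(\<lambda>z. inverse z) holomorphic_on ball \<zeta> r0"
    using B0 by (intro holomorphic_intros) auto
  have hq': "(\<lambda>z. poly q' (inverse z)) holomorphic_on ball \<zeta> r0"
    using holomorphic_on_compose[OF hinv poly_holo[of q' "(\<lambda>z. inverse z) ` ball \<zeta> r0"]] by (simp add: o_def)
  have hp': "(\<lambda>z. poly p' (inverse z)) holomorphic_on ball \<zeta> r0"
    using holomorphic_on_compose[OF hinv poly_holo[of p' "(\<lambda>z. inverse z) ` ball \<zeta> r0"]] by (simp add: o_def)
  have pe_fun: "pe = (\<lambda>z. poly q' (inverse z) / poly p' (inverse z))" using pe_poly by auto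
  have holpe: "pe holomorphic_on ball \<zeta> r0"
    unfolding pe_fun using B0 by (intro holomorphic_on_divide hq' hp') auto
  have zB0: "\<zeta> \<in> ball \<zeta> r0" using r0 by simp
  define D where "D = deriv \<phi> \<zeta>"
  define De where "De = deriv pe \<zeta>"
  have hasD: "(\<phi> has_field_derivative D) (at \<zeta>)"
    unfolding D_def using holomorphic_derivI[OF holphi open_ball zB0] .
  have hasDe: "(pe has_field_derivative De) (at \<zeta>)"
    unfolding De_def using holomorphic_derivI[OF holpe open_ball zB0] .
  have De_form: "De = cnj D * (inverse \<zeta> ^ 2) * inverse (cnj lam ^ 2)"
  proof -
    define psi where "psi = cnj \<circ> \<phi> \<circ> cnj"
    have ci: "cnj (inverse \<zeta>) = \<zeta>" using izeta by simp
    have "(\<phi> has_field_derivative D) (at (cnj (inverse \<zeta>)))"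
      using hasD by (simp only: ci)
    then have hpsi: "(psi has_field_derivative cnj D) (at (inverse \<zeta>))"
      unfolding psi_def by (rule has_field_derivative_cnj_cnj)
    have hi: "((\<lambda>z. inverse z) has_field_derivative - (inverse \<zeta> ^ Suc (Suc 0))) (at \<zeta>)"
      using DERIV_inverse[OF z0] by simp
    have hc: "((\<lambda>z. psi (inverse z)) has_field_derivative cnj D * - (inverse \<zeta> ^ Suc (Suc 0))) (at \<zeta>)"
      using DERIV_chain[OF hpsi hi] by (simp add: o_def)
    have psz: "psi (inverse \<zeta>) = cnj lam"
      by (simp only: psi_def o_def ci lam_def)
    have "psi (inverse \<zeta>) \<noteq> 0" using psz nlam by auto
    from DERIV_inverse_fun[OF hc this]
    have h3: "((\<lambda>z. inverse (psi (inverse z))) has_field_derivative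
        - (cnj D * - (inverse \<zeta> ^ Suc (Suc 0)) * inverse (psi (inverse \<zeta>) ^ Suc (Suc 0)))) (at \<zeta>)" .
    have "(\<lambda>z. inverse (psi (inverse z))) = pe"
      by (rule ext) (simp add: psi_def pe_eq complex_cnj_inverse)
    with h3 have "(pe has_field_derivative
        - (cnj D * - (inverse \<zeta> ^ Suc (Suc 0)) * inverse (psi (inverse \<zeta>) ^ Suc (Suc 0)))) (at \<zeta>)" by simp
    from DERIV_unique[OF hasDe this] show ?thesis using psz by (simp add: power2_eq_square)
  qed
  have lamU: "lam \<in> U" using assms(7) by (simp add: lam_def)
  define s1 where "s1 = deriv \<sigma> lam"
  have hasS: "(\<sigma> has_field_derivative s1) (at lam)"
    unfolding s1_def using holomorphic_derivI[OF assms(8,6) lamU] .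
  have sig_lam: "\<sigma> lam = \<zeta>" using assms(9) by (simp add: lam_def)
  have Des1: "De * s1 = 1"
  proof -
    have "(pe has_field_derivative De) (at (\<sigma> lam))" using hasDe sig_lam by simp
    from DERIV_chain[OF this hasS] have "((pe \<circ> \<sigma>) has_field_derivative De * s1) (at lam)" .
    moreover have "((pe \<circ> \<sigma>) has_field_derivative 1) (at lam)"
      by (rule has_field_derivative_transform_within_open[OF DERIV_ident assms(6) lamU])
         (use assms(10) in \<open>simp add: pe_def\<close>)
    ultimately show ?thesis using DERIV_unique by blast
  qed
  have De0: "De \<noteq> 0" using Des1 by auto
  have D0: "D \<noteq> 0" using De0 De_form by auto
  define g where "g = (\<lambda>z. pe z - \<phi> z)"
  have holg: "g holomorphic_on ball \<zeta> r0" unfolding g_def by (intro holomorphic_intros holpe holphi)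
  have g0: "g \<zeta> = 0" by (simp add: g_def pe_zeta lam_def)
  let ?F = "at \<zeta> within sphere 0 1"
  have lp: "\<zeta> islimpt sphere 0 1"
  proof (rule connected_imp_perfect)
    show "connected (sphere (0::complex) 1)" by (rule connected_sphere) simp
    show "\<zeta> \<in> sphere 0 1" using assms(4) by simp
    fix x :: complex show "sphere 0 1 \<noteq> {x}"
    proof
      assume a: "sphere 0 1 = {x}"
      have "1 \<in> sphere (0::complex) 1" "-1 \<in> sphere (0::complex) 1" by auto
      then show False using a by auto
    qed
  qed
  have nt: "?F \<noteq> bot" using lp trivial_limit_within by blast
  define L where "L = A * (norm D / 2) ^ n"
  define M where "M = 2 * B * (2 * norm D) ^ n"
  have Lpos: "L > 0" using AB D0 by (simp add: L_def)
  have evB0: "\<forall>\<^sub>F w in ?F. w \<in> ball \<zeta> r0"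
  proof -
    have "\<forall>\<^sub>F w in nhds \<zeta>. w \<in> ball \<zeta> r0" by (rule eventually_nhds_in_open) (use r0 in auto)
    then show ?thesis by (simp add: eventually_at_filter eventually_mono)
  qed
  have EV: "\<forall>\<^sub>F w in ?F. w \<in> ball \<zeta> r0 \<and> w \<noteq> \<zeta> \<and> L * norm (w - \<zeta>) ^ n \<le> norm (g w) \<and>
               norm (g w) \<le> M * norm (w - \<zeta>) ^ n"
    using circle_bounds[OF hasD D0 AB evc assms(5)[unfolded order_of_contact_def, THEN conjunct1]] evB0
  proof eventually_elim
    case (elim w)
    have "norm w = 1" using elim by simp
    then have "pe w = inverse (cnj (\<phi> w))" by (simp add: pe_eq inv_cnj_unit)
    then have "g w = inverse (cnj (\<phi> w)) - \<phi> w" by (simp add: g_def)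
    then show ?case using elim by (simp add: L_def M_def mult.assoc)
  qed
  have nconst: "\<not> g constant_on ball \<zeta> r0"
  proof
    assume "g constant_on ball \<zeta> r0"
    then obtain c where c: "\<And>z. z \<in> ball \<zeta> r0 \<Longrightarrow> g z = c" unfolding constant_on_def by blast
    then have cz: "c = 0" using g0 zB0 by force
    obtain w where w: "w \<in> ball \<zeta> r0" "w \<noteq> \<zeta>" "L * norm (w - \<zeta>) ^ n \<le> norm (g w)"
      using eventually_happens'[OF nt EV] by blast
    have "L * norm (w - \<zeta>) ^ n > 0" using Lpos w(2) by simp
    then show False using w c cz by simp
  qed
  obtain h r1 m where m0: "0 < m" and r1: "0 < r1" "ball \<zeta> r1 \<subseteq> ball \<zeta> r0"
      and holh: "h holomorphic_on ball \<zeta> r1"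
      and gfac: "\<And>w. w \<in> ball \<zeta> r1 \<Longrightarrow> g w = (w - \<zeta>) ^ m * h w"
      and hnz: "\<And>w. w \<in> ball \<zeta> r1 \<Longrightarrow> h w \<noteq> 0"
    by (rule holomorphic_factor_zero_nonconstant[OF holg open_ball connected_ball zB0 g0 nconst]) (rule that; assumption)
  have zB1: "\<zeta> \<in> ball \<zeta> r1" using r1 by simp
  have hcont: "isCont h \<zeta>"
    using holh holomorphic_on_imp_continuous_on continuous_on_eq_continuous_at open_ball zB1 by blast
  have mn: "m = n"
  proof (rule order_from_bounds[OF lp hcont hnz[OF zB1] Lpos])
    have "\<forall>\<^sub>F w in nhds \<zeta>. w \<in> ball \<zeta> r1" by (rule eventually_nhds_in_open) (use r1 in auto)
    then have "\<forall>\<^sub>F w in ?F. w \<in> ball \<zeta> r1" by (simp add: eventually_at_filter eventually_mono)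
    with EV show "\<forall>\<^sub>F w in ?F. w \<noteq> \<zeta> \<and> L * norm (w - \<zeta>) ^ n \<le> norm ((w - \<zeta>) ^ m * h w)
                \<and> norm ((w - \<zeta>) ^ m * h w) \<le> M * norm (w - \<zeta>) ^ n"
      by eventually_elim (simp add: gfac)
  qed
  have gder: "(deriv ^^ j) g \<zeta> = (if j = n then fact n * h \<zeta> else 0)" if "j \<le> n" for j
  proof -
    have ev: "eventually (\<lambda>w. g w = (w - \<zeta>) ^ n * h w) (nhds \<zeta>)"
      using eventually_nhds_in_open[OF open_ball zB1] by (auto elim: eventually_mono simp: gfac mn)
    have "(deriv ^^ j) g \<zeta> = (deriv ^^ j) (\<lambda>w. (w - \<zeta>) ^ n * h w) \<zeta>"
      by (rule higher_deriv_cong_ev[OF ev refl])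
    also have "\<dots> = (if j = n then fact n * h \<zeta> else 0)" by (rule hd_factor[OF holh r1(1) that])
    finally show ?thesis .
  qed
  have gder2: "(deriv ^^ j) g \<zeta> = (deriv ^^ j) pe \<zeta> - (deriv ^^ j) \<phi> \<zeta>" for j
    unfolding g_def by (rule higher_deriv_diff[OF holpe holphi open_ball zB0])
  define c where "c = (deriv ^^ n) \<phi> \<zeta> - (deriv ^^ n) pe \<zeta>"
  have c_eq: "c = - (fact n * h \<zeta>)"
  proof -
    have "(deriv ^^ n) pe \<zeta> - (deriv ^^ n) \<phi> \<zeta> = fact n * h \<zeta>" using gder[of n] gder2[of n] by simp
    then show ?thesis unfolding c_def by (metis minus_diff_eq)
  qed
  have c0: "c \<noteq> 0" using c_eq hnz[OF zB1] by simp
  have DeD: "De = D"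
  proof -
    have "(deriv ^^ 1) g \<zeta> = 0" using gder[of 1] n2 by simp
    then show ?thesis using gder2[of 1] by (simp add: De_def D_def)
  qed
  have Ds1: "D * s1 = 1" using Des1 DeD by simp
  have injU: "inj_on \<sigma> U"
  proof (rule inj_onI)
    fix x y assume "x \<in> U" "y \<in> U" "\<sigma> x = \<sigma> y"
    then show "x = y" using assms(10) by metis
  qed
  obtain r2 where r2: "r2 > 0" "ball lam r2 \<subseteq> U" using assms(6) lamU openE by blast
  define V where "V = \<sigma> ` ball lam r2"
  have openV: "open V" unfolding V_def
    by (rule open_mapping_thm3[OF holomorphic_on_subset[OF assms(8) r2(2)] open_ball inj_on_subset[OF injU r2(2)]])
  have zV: "\<zeta> \<in> V" using sig_lam r2(1) unfolding V_def by (metis centre_in_ball image_eqI)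
  have sig_pe: "\<sigma> (pe z) = z" if zv: "z \<in> V" for z
  proof -
    obtain w where w: "w \<in> ball lam r2" "z = \<sigma> w" using zv unfolding V_def by blast
    then have "w \<in> U" using r2 by blast
    then have "pe z = w" using w assms(10) by (simp add: pe_def)
    then show ?thesis using w by simp
  qed
  have cphi: "isCont \<phi> \<zeta>" using hasD DERIV_isCont by blast
  have cpe: "isCont pe \<zeta>" using hasDe DERIV_isCont by blast
  obtain d3 where d3: "d3 > 0" "\<And>z. dist z \<zeta> < d3 \<Longrightarrow> dist (\<phi> z) (\<phi> \<zeta>) < r2"
    using cphi r2(1) unfolding continuous_at_eps_delta by blast
  obtain rV where rV: "rV > 0" "ball \<zeta> rV \<subseteq> V" using openV zV openE by blast
  define r3 where "r3 = min (min r1 rV) d3"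
  have r3: "r3 > 0" using r1 rV d3 by (simp add: r3_def)
  have B3: "z \<in> ball \<zeta> r1 \<and> z \<in> V \<and> \<phi> z \<in> U" if "z \<in> ball \<zeta> r3" for z
  proof -
    have "dist z \<zeta> < d3" using that by (simp add: r3_def dist_commute)
    then have "dist (\<phi> z) lam < r2" using d3 by (simp add: lam_def)
    then have "\<phi> z \<in> U" using r2 by (auto simp: dist_commute)
    moreover have "z \<in> ball \<zeta> rV" using that by (simp add: r3_def)
    ultimately show ?thesis using that rV by (auto simp: r3_def)
  qed
  have zB3: "\<zeta> \<in> ball \<zeta> r3" using r3 by simp
  have gpe: "\<phi> z - pe z = - ((z - \<zeta>) ^ n * h z)" if "z \<in> ball \<zeta> r1" for z
  proof -
    have "pe z - \<phi> z = (z - \<zeta>) ^ n * h z" using gfac[OF that] mn by (simp add: g_def)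
    then show ?thesis by (metis minus_diff_eq)
  qed
  have DQ: "((\<lambda>z. (\<sigma> (\<phi> z) - \<sigma> (pe z)) / (\<phi> z - pe z)) \<longlongrightarrow> s1) (at \<zeta>)"
  proof (rule tendstoI)
    fix e :: real assume e: "e > 0"
    obtain d where d: "d > 0" "ball lam d \<subseteq> U"
      and sd: "\<forall>a\<in>ball lam d. \<forall>b\<in>ball lam d. norm (\<sigma> a - \<sigma> b - s1 * (a - b)) \<le> e / 2 * norm (a - b)"
      using strong_diff[OF assms(8,6) lamU, of "e/2"] e unfolding s1_def by auto
    have ev1: "\<forall>\<^sub>F z in at \<zeta>. \<phi> z \<in> ball lam d"
      using cphi d(1) unfolding isCont_def lam_def by (intro topological_tendstoD) auto
    have ev2: "\<forall>\<^sub>F z in at \<zeta>. pe z \<in> ball lam d"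
      using cpe d(1) unfolding isCont_def pe_zeta by (intro topological_tendstoD) auto
    have ev3: "\<forall>\<^sub>F z in at \<zeta>. z \<in> ball \<zeta> r1 \<and> z \<noteq> \<zeta>"
    proof -
      have "\<forall>\<^sub>F w in nhds \<zeta>. w \<in> ball \<zeta> r1" by (rule eventually_nhds_in_open) (use r1 in auto)
      then show ?thesis by (simp add: eventually_at_filter eventually_mono)
    qed
    from ev1 ev2 ev3 show "\<forall>\<^sub>F z in at \<zeta>. dist ((\<sigma> (\<phi> z) - \<sigma> (pe z)) / (\<phi> z - pe z)) s1 < e"
    proof eventually_elim
      case (elim z)
      define a where "a = \<phi> z"
      define b where "b = pe z"
      have "a - b \<noteq> 0"
        using gpe[of z] elim hnz[of z] by (simp add: a_def b_def)
      then have nab: "norm (a - b) > 0" by simp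
      have "(\<sigma> a - \<sigma> b) / (a - b) - s1 = (\<sigma> a - \<sigma> b - s1 * (a - b)) / (a - b)"
        using \<open>a - b \<noteq> 0\<close> by (simp add: field_simps)
      then have "dist ((\<sigma> a - \<sigma> b) / (a - b)) s1 = norm (\<sigma> a - \<sigma> b - s1 * (a - b)) / norm (a - b)"
        by (simp add: dist_norm norm_divide)
      also have "\<dots> \<le> e / 2"
        using sd elim nab by (simp add: a_def b_def divide_le_eq)
      also have "\<dots> < e" using e by simp
      finally show ?case by (simp add: a_def b_def)
    qed
  qed
  define k where "k = (\<lambda>z. if z = \<zeta> then - (h \<zeta> * s1) else (\<sigma> (\<phi> z) - z) / (z - \<zeta>) ^ n)"
  have keq: "k z = - h z * ((\<sigma> (\<phi> z) - \<sigma> (pe z)) / (\<phi> z - pe z))"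
    if "z \<in> ball \<zeta> r3" "z \<noteq> \<zeta>" for z
  proof -
    have zz: "z \<in> ball \<zeta> r1" "z \<in> V" using B3[OF that(1)] by auto
    have hz: "h z \<noteq> 0" using hnz zz by simp
    have nz: "(z - \<zeta>) ^ n \<noteq> 0" using that by simp
    have "- h z * ((\<sigma> (\<phi> z) - \<sigma> (pe z)) / (\<phi> z - pe z))
          = - h z * ((\<sigma> (\<phi> z) - z) / (- ((z - \<zeta>) ^ n * h z)))"
      by (simp only: sig_pe[OF zz(2)] gpe[OF zz(1)])
    also have "\<dots> = (\<sigma> (\<phi> z) - z) / (z - \<zeta>) ^ n"
      using hz nz by (simp add: divide_simps)
    also have "\<dots> = k z" using that(2) by (simp add: k_def)
    finally show ?thesis by simp
  qed
  have klim: "(k \<longlongrightarrow> k \<zeta>) (at \<zeta>)"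
  proof -
    have "((\<lambda>z. - h z * ((\<sigma> (\<phi> z) - \<sigma> (pe z)) / (\<phi> z - pe z))) \<longlongrightarrow> - h \<zeta> * s1) (at \<zeta>)"
      using hcont DQ unfolding isCont_def by (intro tendsto_intros)
    moreover have "\<forall>\<^sub>F z in at \<zeta>. - h z * ((\<sigma> (\<phi> z) - \<sigma> (pe z)) / (\<phi> z - pe z)) = k z"
    proof -
      have "\<forall>\<^sub>F w in nhds \<zeta>. w \<in> ball \<zeta> r3" by (rule eventually_nhds_in_open) (use r3 in auto)
      then show ?thesis by (simp add: eventually_at_filter eventually_mono keq)
    qed
    ultimately have "(k \<longlongrightarrow> - h \<zeta> * s1) (at \<zeta>)" by (rule Lim_transform_eventually)
    then show ?thesis by (simp add: k_def)
  qed
  have B3sub: "ball \<zeta> r3 \<subseteq> ball \<zeta> r0" using r1(2) by (auto simp: r3_def)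
  have holsp: "(\<sigma> \<circ> \<phi>) holomorphic_on ball \<zeta> r3"
    by (rule holomorphic_on_compose_gen[OF holomorphic_on_subset[OF holphi B3sub] assms(8)]) (use B3 in auto)
  have holk: "k holomorphic_on ball \<zeta> r3"
  proof (rule no_isolated_singularity'[where K="{\<zeta>}"])
    show "(k \<longlongrightarrow> k z) (at z within ball \<zeta> r3)" if "z \<in> {\<zeta>}" for z
      using that klim at_within_open[OF zB3 open_ball] by simp
    have "(\<lambda>z. ((\<sigma> \<circ> \<phi>) z - z) / (z - \<zeta>) ^ n) holomorphic_on ball \<zeta> r3 - {\<zeta>}"
      by (intro holomorphic_intros holomorphic_on_subset[OF holsp]) auto
    then show "k holomorphic_on ball \<zeta> r3 - {\<zeta>}"
      by (rule holomorphic_transform) (simp add: k_def)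
  qed auto
  have eq1: "\<forall>w\<in>ball \<zeta> r3. (\<sigma> \<circ> \<phi>) w = w + (w - \<zeta>) ^ n * k w"
  proof
    fix w assume w: "w \<in> ball \<zeta> r3"
    show "(\<sigma> \<circ> \<phi>) w = w + (w - \<zeta>) ^ n * k w"
    proof (cases "w = \<zeta>")
      case True then show ?thesis using sig_lam n2 by (simp add: lam_def)
    next
      case False then show ?thesis by (simp add: k_def)
    qed
  qed
  have Dn1: "Dn (\<sigma> \<circ> \<phi>) \<zeta> n = [\<zeta>, 1] @ replicate (n-2) 0 @ [fact n * k \<zeta>]"
    by (rule Dn_shape[OF holk r3 n2 eq1])
  have v1: "fact n * k \<zeta> = c / D"
    using Ds1 D0 c_eq by (simp add: k_def field_simps)
  have csig: "isCont \<sigma> lam" using hasS DERIV_isCont by blast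
  obtain d4 where d4: "d4 > 0" "\<And>w. dist w lam < d4 \<Longrightarrow> dist (\<sigma> w) (\<sigma> lam) < r1"
    using csig r1(1) unfolding continuous_at_eps_delta by blast
  define r4 where "r4 = min r2 d4"
  have r4: "r4 > 0" using r2 d4 by (simp add: r4_def)
  have B4: "w \<in> U \<and> \<sigma> w \<in> ball \<zeta> r1" if "w \<in> ball lam r4" for w
  proof -
    have "dist w lam < d4" using that by (simp add: r4_def dist_commute)
    then have "dist (\<sigma> w) \<zeta> < r1" using d4 sig_lam by simp
    moreover have "w \<in> ball lam r2" using that by (simp add: r4_def)
    ultimately show ?thesis using r2 by (auto simp: dist_commute)
  qed
  have B4U: "ball lam r4 \<subseteq> U" using B4 by blast
  define sq where "sq = (\<lambda>w. if w = lam then s1 else (\<sigma> w - \<zeta>) / (w - lam))"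
  have zB4: "lam \<in> ball lam r4" using r4 by simp
  have sqlim: "(sq \<longlongrightarrow> sq lam) (at lam)"
  proof -
    have "((\<lambda>w. (\<sigma> w - \<sigma> lam) / (w - lam)) \<longlongrightarrow> s1) (at lam)"
      using hasS has_field_derivative_iff by blast
    moreover have "\<forall>\<^sub>F w in at lam. (\<sigma> w - \<sigma> lam) / (w - lam) = sq w"
      by (simp add: eventually_at_filter sq_def sig_lam)
    ultimately have "(sq \<longlongrightarrow> s1) (at lam)" by (rule Lim_transform_eventually)
    then show ?thesis by (simp add: sq_def)
  qed
  have holsq: "sq holomorphic_on ball lam r4"
  proof (rule no_isolated_singularity'[where K="{lam}"])
    show "(sq \<longlongrightarrow> sq z) (at z within ball lam r4)" if "z \<in> {lam}" for z
      using that sqlim at_within_open[OF zB4 open_ball] by simp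
    have "(\<lambda>w. (\<sigma> w - \<zeta>) / (w - lam)) holomorphic_on ball lam r4 - {lam}"
      by (intro holomorphic_intros holomorphic_on_subset[OF assms(8)]) (use B4U in auto)
    then show "sq holomorphic_on ball lam r4 - {lam}"
      by (rule holomorphic_transform) (simp add: sq_def)
  qed auto
  define K where "K = (\<lambda>w. - (sq w ^ n * h (\<sigma> w)))"
  have holhs: "(h \<circ> \<sigma>) holomorphic_on ball lam r4"
    by (rule holomorphic_on_compose_gen[OF holomorphic_on_subset[OF assms(8) B4U] holh]) (use B4 in auto)
  have holK: "K holomorphic_on ball lam r4"
    unfolding K_def using holhs holsq by (intro holomorphic_intros) (auto simp: o_def)
  have eq2: "\<forall>w\<in>ball lam r4. (\<phi> \<circ> \<sigma>) w = w + (w - lam) ^ n * K w"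
  proof
    fix w assume w: "w \<in> ball lam r4"
    have wU: "w \<in> U" and sw: "\<sigma> w \<in> ball \<zeta> r1" using B4[OF w] by auto
    have fac: "\<sigma> w - \<zeta> = (w - lam) * sq w"
      by (cases "w = lam") (auto simp: sq_def sig_lam)
    have pes: "pe (\<sigma> w) = w" using assms(10) wU by (simp add: pe_def)
    have "\<phi> (\<sigma> w) = pe (\<sigma> w) - g (\<sigma> w)" by (simp add: g_def)
    also have "\<dots> = w - (\<sigma> w - \<zeta>) ^ n * h (\<sigma> w)" using gfac[OF sw] mn pes by simp
    also have "\<dots> = w + (w - lam) ^ n * K w" by (simp add: fac K_def power_mult_distrib)
    finally show "(\<phi> \<circ> \<sigma>) w = w + (w - lam) ^ n * K w" by simp
  qed
  have Dn2: "Dn (\<phi> \<circ> \<sigma>) lam n = [lam, 1] @ replicate (n-2) 0 @ [fact n * K lam]"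
    by (rule Dn_shape[OF holK r4 n2 eq2])
  have v2: "fact n * K lam = c / D ^ n"
  proof -
    have "D ^ n * s1 ^ n = 1" using Ds1 by (metis power_mult_distrib power_one)
    then show ?thesis using D0 c_eq sig_lam by (simp add: K_def sq_def field_simps)
  qed
  show ?thesis
    using c0 Dn1 Dn2 v1 v2 by (simp add: c_def pe_def D_def lam_def)
qed

end
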